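(* Let $p$ be a prime, $n\ge1$, and let $V,W\subset\mathbb{F}_{p^n}$ be $\mathbb{F}_p$-subspaces with $\dim_{\mathbb{F}_p}V+\dim_{\mathbb{F}_p}W\le n$. Then there exists $z\in\mathbb{F}_{p^n}^\times$ such that $V\cap zW=\{0\}$, where $zW=\{zw: w\in W\}$. *)

theory Defs
  imports Main "Berlekamp_Zassenhaus.Finite_Field"
begin

text \<open>Scalar multiplication of the prime field F_p (modelled as the type 'p mod_ring,
  with CARD('p) = p prime) on a field of characteristic p.\<close>
definition fp_scale :: "'p::prime_card mod_ring \<Rightarrow> 'a::field \<Rightarrow> 'a" where
  "fp_scale c x = of_int (to_int_mod_ring c) * x"

end

theory Submission
  imports Defs
begin

lemma fp_vs:
  assumes "CARD('p::prime_card) = CHAR('a::field)"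
  shows "vector_space (fp_scale :: 'p mod_ring \<Rightarrow> 'a \<Rightarrow> 'a)"
proof
  have h: "of_int (x mod int CARD('p)) = (of_int x :: 'a)" for x
    using assms of_int_mod_CHAR[of x] by simp
  fix a b :: "'p mod_ring" and x y :: 'a
  show "fp_scale a (x + y) = fp_scale a x + fp_scale a y"
    by (simp add: fp_scale_def distrib_left)
  show "fp_scale (a + b) x = fp_scale a x + fp_scale b x"
    by (simp add: fp_scale_def to_int_mod_ring_add h distrib_right)
  show "fp_scale a (fp_scale b x) = fp_scale (a * b) x"
    by (simp add: fp_scale_def to_int_mod_ring_mult h)
  show "fp_scale 1 x = x"
    by (simp add: fp_scale_def)
qed

lemma card_span_le:
  fixes scale :: "'c::{field,finite} \<Rightarrow> 'b::{ab_group_add,finite} \<Rightarrow> 'b"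
  assumes vs: "vector_space scale" and fin: "finite B"
  shows "card (module.span scale B) \<le> CARD('c) ^ card B"
  using fin
proof (induction B rule: finite_induct)
  case empty
  interpret vector_space scale by fact
  show ?case by simp
next
  case (insert b B)
  interpret vector_space scale by fact
  have "span (insert b B) \<subseteq> (\<lambda>(c,x). scale c b + x) ` (UNIV \<times> span B)"
  proof
    fix y assume "y \<in> span (insert b B)"
    then obtain k where "y - scale k b \<in> span B" by (auto simp: span_insert)
    then show "y \<in> (\<lambda>(c,x). scale c b + x) ` (UNIV \<times> span B)"
      by (intro image_eqI[of _ _ "(k, y - scale k b)"]) auto
  qed
  then have "card (span (insert b B)) \<le> card ((\<lambda>(c,x). scale c b + x) ` (UNIV \<times> span B))"
    by (intro card_mono) auto
  also have "\<dots> \<le> card ((UNIV :: 'c set) \<times> span B)" by (rule card_image_le) simp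
  also have "\<dots> = CARD('c) * card (span B)" by (simp add: card_cartesian_product)
  also have "\<dots> \<le> CARD('c) * CARD('c) ^ card B" using insert.IH by simp
  finally show ?case using insert by simp
qed

lemma card_subspace_le:
  fixes scale :: "'c::{field,finite} \<Rightarrow> 'b::{ab_group_add,finite} \<Rightarrow> 'b"
  assumes vs: "vector_space scale" and "module.subspace scale V"
  shows "card V \<le> CARD('c) ^ vector_space.dim scale V"
proof -
  interpret vector_space scale by fact
  obtain B where B: "B \<subseteq> V" "independent B" "V \<subseteq> span B" "card B = dim V"
    by (rule basis_exists)
  have "card V \<le> card (span B)" by (rule card_mono) (use B in auto)
  also have "\<dots> \<le> CARD('c) ^ card B" by (rule card_span_le[OF vs]) simp
  finally show ?thesis using B by simp
qed


theorem mainTheorem2: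
  fixes V W :: "'a::{field,finite} set"
    and p n :: nat
  assumes "CARD('p) = p"
    and "prime p"
    and "n \<ge> 1"
    and "CARD('a) = p ^ n"
    and "CHAR('a) = p"
    and "module.subspace (fp_scale :: 'p::prime_card mod_ring \<Rightarrow> 'a \<Rightarrow> 'a) V"
    and "module.subspace (fp_scale :: 'p::prime_card mod_ring \<Rightarrow> 'a \<Rightarrow> 'a) W"
    and "vector_space.dim (fp_scale :: 'p::prime_card mod_ring \<Rightarrow> 'a \<Rightarrow> 'a) V + vector_space.dim (fp_scale :: 'p::prime_card mod_ring \<Rightarrow> 'a \<Rightarrow> 'a) W \<le> n"
  shows "\<exists>z::'a. z \<noteq> 0 \<and> V \<inter> ((\<lambda>w. z * w) ` W) = {0}"
proof -
  have vs: "vector_space (fp_scale :: 'p mod_ring \<Rightarrow> 'a \<Rightarrow> 'a)"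
    by (rule fp_vs) (use assms in simp)
  interpret vector_space "fp_scale :: 'p mod_ring \<Rightarrow> 'a \<Rightarrow> 'a" by (rule vs)
  have V0: "0 \<in> V" and W0: "0 \<in> W" using assms(6,7) subspace_0 by auto
  have cV: "card V \<le> p ^ dim V" using card_subspace_le[OF vs assms(6)] assms(1) by simp
  have cW: "card W \<le> p ^ dim W" using card_subspace_le[OF vs assms(7)] assms(1) by simp
  have "card V * card W \<le> p ^ dim V * p ^ dim W" using cV cW by (rule mult_le_mono)
  also have "\<dots> = p ^ (dim V + dim W)" by (simp add: power_add)
  also have "\<dots> \<le> p ^ n" using assms(8) assms(2) prime_gt_0_nat by (intro power_increasing) (auto simp: Suc_le_eq)
  finally have prod: "card V * card W \<le> CARD('a)" using assms(4) by simp
  show ?thesis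
  proof (cases "V = {0} \<or> W = {0}")
    case True
    then show ?thesis
    proof
      assume "V = {0}" then show ?thesis using W0 by (intro exI[of _ 1]) auto
    next
      assume "W = {0}" then show ?thesis using V0 by (intro exI[of _ 1]) auto
    qed
  next
    case False
    have "card V \<ge> 2"
    proof -
      obtain v where "v \<in> V" "v \<noteq> 0" using False V0 by blast
      then have "{0, v} \<subseteq> V" using V0 by auto
      then have "card {0, v} \<le> card V" by (intro card_mono) auto
      with \<open>v \<noteq> 0\<close> show ?thesis by simp
    qed
    have "card W \<ge> 2"
    proof -
      obtain v where "v \<in> W" "v \<noteq> 0" using False W0 by blast
      then have "{0, v} \<subseteq> W" using W0 by auto
      then have "card {0, v} \<le> card W" by (intro card_mono) auto
      with \<open>v \<noteq> 0\<close> show ?thesis by simp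
    qed
    define Bad where "Bad = (\<lambda>(v,w). v / w) ` ((V - {0}) \<times> (W - {0}))"
    have "card Bad \<le> card ((V - {0}) \<times> (W - {0}))" unfolding Bad_def by (rule card_image_le) simp
    also have "\<dots> = (card V - 1) * (card W - 1)"
      using V0 W0 by (simp add: card_cartesian_product card_Diff_singleton)
    finally have cB: "card Bad \<le> (card V - 1) * (card W - 1)" .
    have "(card V - 1) * (card W - 1) < CARD('a) - 1"
    proof -
      let ?a = "card V" and ?b = "card W"
      have "(?a - 1) * (?b - 1) + ?a + ?b = ?a * ?b + 1"
        using \<open>?a \<ge> 2\<close> \<open>?b \<ge> 2\<close>
        by (cases ?a; cases ?b) (auto simp: algebra_simps)
      then show ?thesis using prod \<open>?a \<ge> 2\<close> \<open>?b \<ge> 2\<close> by linarith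
    qed
    also have "\<dots> = card (UNIV - {0::'a})" by (simp add: card_Diff_singleton)
    finally have "card Bad < card (UNIV - {0::'a})" using cB by linarith
    then obtain z where z: "z \<in> UNIV - {0::'a}" "z \<notin> Bad"
      by (metis card_mono finite subsetI not_le)
    show ?thesis
    proof (intro exI[of _ z] conjI)
      show "z \<noteq> 0" using z by simp
      show "V \<inter> (\<lambda>w. z * w) ` W = {0}"
      proof
        show "{0} \<subseteq> V \<inter> (\<lambda>w. z * w) ` W" using V0 W0 by auto
        show "V \<inter> (\<lambda>w. z * w) ` W \<subseteq> {0}"
        proof
          fix x assume x: "x \<in> V \<inter> (\<lambda>w. z * w) ` W"
          then obtain w where w: "w \<in> W" "x = z * w" by auto
          show "x \<in> {0}"
          proof (rule ccontr)
            assume "x \<notin> {0}"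
            then have "x \<noteq> 0" "w \<noteq> 0" using w by auto
            then have "z = x / w" using w by (simp add: field_simps)
            then have "z \<in> Bad" unfolding Bad_def using x w \<open>x \<noteq> 0\<close> \<open>w \<noteq> 0\<close>
              by (intro image_eqI[of _ _ "(x, w)"]) auto
            with z show False by simp
          qed
        qed
      qed
    qed
  qed
qed

end
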